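(* Let $S$ be a finite set, $T$ a set, $\pi:S\to T$ a map, and $\mathbb{P}$ a $\pi$-measurable probability measure on $S$. Let $J\ge1$, let $T_1,\dots,T_J$ be sets and $\pi_j:S\to T_j$ maps forming a $\pi$-inverse system, let $B_1,\dots,B_J\subseteq S$, and let $\delta_1,\dots,\delta_J\in[0,1/2]$. Let $\mathbb{P}_0,\dots,\mathbb{P}_J$, $\alpha_j$, $M_j^{(1)},M_j^{(2)}$ be as defined in the context. Assume that $B_j$ is $\pi_j$-measurable for every $1\le j\le J$. If \[ \sum_{j=1}^J\min\left\{M_j^{(1)},\frac{M_j^{(2)}}{4\delta_j(1-\delta_j)}\right\}<1, \] then $\mathbb{P}_J\big(\bigcup_{1\le j\le J}B_j\big)<1$.
   Context: A function $f:S\to\mathbb{C}$ is $\pi$-measurable if $f(x)=f(x')$ whenever $\pi(x)=\pi(x')$; a subset $B\subseteq S$ is $\pi$-measurable if $x\in B$, $x'\in S$, $\pi(x')=\pi(x)$ imply $x'\in B$. A probability measure on the finite set $S$ is identified with its mass function $x\mapsto\mathbb{P}(x)$, and it is $\pi$-measurable if this function is. The maps $\pi_1,\dots,\pi_J$ form a $\pi$-inverse system if, setting $\pi_0=\pi$, for every $1\le j\le J$ and $x,x'\in S$, $\pi_j(x)=\pi_j(x')$ implies $\pi_{j-1}(x)=\pi_{j-1}(x')$. Construction: $\mathbb{P}_0=\mathbb{P}$; for $1\le j\le J$ and $x\in S$ let $F_{j-1}(x)=\{x'\in S:\pi_{j-1}(x')=\pi_{j-1}(x)\}$, $\alpha_j(x)=|F_{j-1}(x)\cap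 B_j|/|F_{j-1}(x)|$, and \[ \mathbb{P}_j(x)=\mathbb{P}_{j-1}(x)\cdot\begin{cases}\dfrac{1_{x\notin B_j}}{1-\alpha_j(x)}, & \alpha_j(x)<\delta_j,\\[2mm] \dfrac{\alpha_j(x)-1_{x\in B_j}\delta_j}{\alpha_j(x)(1-\delta_j)}, & \alpha_j(x)\ge\delta_j,\end{cases} \] where in the degenerate case $\alpha_j(x)=0$ (possible in the second case only if $\delta_j=0$) the factor is taken to be $1$. Each $\mathbb{P}_j$ is a probability measure on $S$. For $f:S\to\mathbb{C}$ set $\mathbb{E}_j[f]=\sum_{x\in S}f(x)\mathbb{P}_j(x)$, and $M_j^{(1)}=\mathbb{E}_{j-1}[\alpha_j]$, $M_j^{(2)}=\mathbb{E}_{j-1}[\alpha_j^2]$. When $\delta_j=0$ the term $M_j^{(2)}/(4\delta_j(1-\delta_j))$ is interpreted as $+\infty$, so the minimum equals $M_j^{(1)}$. *)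

theory Defs
  imports Complex_Main
begin

definition pimap :: "('a \<Rightarrow> 'b) \<Rightarrow> (nat \<Rightarrow> 'a \<Rightarrow> 'b) \<Rightarrow> nat \<Rightarrow> 'a \<Rightarrow> 'b" where
  "pimap p0 pis j = (if j = 0 then p0 else pis j)"

definition fibre :: "'a set \<Rightarrow> ('a \<Rightarrow> 'b) \<Rightarrow> (nat \<Rightarrow> 'a \<Rightarrow> 'b) \<Rightarrow> nat \<Rightarrow> 'a \<Rightarrow> 'a set" where
  "fibre S p0 pis j x = {x' \<in> S. pimap p0 pis j x' = pimap p0 pis j x}"

definition alpha :: "'a set \<Rightarrow> ('a \<Rightarrow> 'b) \<Rightarrow> (nat \<Rightarrow> 'a \<Rightarrow> 'b) \<Rightarrow> (nat \<Rightarrow> 'a set) \<Rightarrow> nat \<Rightarrow> 'a \<Rightarrow> real" where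
  "alpha S p0 pis B j x =
     real (card (fibre S p0 pis (j - 1) x \<inter> B j)) / real (card (fibre S p0 pis (j - 1) x))"

definition factor :: "'a set \<Rightarrow> ('a \<Rightarrow> 'b) \<Rightarrow> (nat \<Rightarrow> 'a \<Rightarrow> 'b) \<Rightarrow> (nat \<Rightarrow> 'a set) \<Rightarrow> (nat \<Rightarrow> real) \<Rightarrow> nat \<Rightarrow> 'a \<Rightarrow> real" where
  "factor S p0 pis B \<delta> j x =
     (let a = alpha S p0 pis B j x in
      if a < \<delta> j then (if x \<notin> B j then 1 else 0) / (1 - a)
      else if a = 0 then 1
      else (a - (if x \<in> B j then \<delta> j else 0)) / (a * (1 - \<delta> j)))"

fun Pj :: "'a set \<Rightarrow> ('a \<Rightarrow> 'b) \<Rightarrow> (nat \<Rightarrow> 'a \<Rightarrow> 'b) \<Rightarrow> (nat \<Rightarrow> 'a set) \<Rightarrow> (nat \<Rightarrow> real) \<Rightarrow> ('a \<Rightarrow> real) \<Rightarrow> nat \<Rightarrow> 'a \<Rightarrow> real" where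
  "Pj S p0 pis B \<delta> P 0 x = P x"
| "Pj S p0 pis B \<delta> P (Suc j) x = Pj S p0 pis B \<delta> P j x * factor S p0 pis B \<delta> (Suc j) x"

definition Ej :: "'a set \<Rightarrow> ('a \<Rightarrow> 'b) \<Rightarrow> (nat \<Rightarrow> 'a \<Rightarrow> 'b) \<Rightarrow> (nat \<Rightarrow> 'a set) \<Rightarrow> (nat \<Rightarrow> real) \<Rightarrow> ('a \<Rightarrow> real) \<Rightarrow> nat \<Rightarrow> ('a \<Rightarrow> real) \<Rightarrow> real" where
  "Ej S p0 pis B \<delta> P j f = (\<Sum>x\<in>S. f x * Pj S p0 pis B \<delta> P j x)"

definition M1 :: "'a set \<Rightarrow> ('a \<Rightarrow> 'b) \<Rightarrow> (nat \<Rightarrow> 'a \<Rightarrow> 'b) \<Rightarrow> (nat \<Rightarrow> 'a set) \<Rightarrow> (nat \<Rightarrow> real) \<Rightarrow> ('a \<Rightarrow> real) \<Rightarrow> nat \<Rightarrow> real" where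
  "M1 S p0 pis B \<delta> P j = Ej S p0 pis B \<delta> P (j - 1) (alpha S p0 pis B j)"

definition M2 :: "'a set \<Rightarrow> ('a \<Rightarrow> 'b) \<Rightarrow> (nat \<Rightarrow> 'a \<Rightarrow> 'b) \<Rightarrow> (nat \<Rightarrow> 'a set) \<Rightarrow> (nat \<Rightarrow> real) \<Rightarrow> ('a \<Rightarrow> real) \<Rightarrow> nat \<Rightarrow> real" where
  "M2 S p0 pis B \<delta> P j = Ej S p0 pis B \<delta> P (j - 1) (\<lambda>x. (alpha S p0 pis B j x)^2)"

(* min{M1, M2/(4 delta(1-delta))}, with the delta = 0 convention (term = +infinity) *)
definition bound_term :: "'a set \<Rightarrow> ('a \<Rightarrow> 'b) \<Rightarrow> (nat \<Rightarrow> 'a \<Rightarrow> 'b) \<Rightarrow> (nat \<Rightarrow> 'a set) \<Rightarrow> (nat \<Rightarrow> real) \<Rightarrow> ('a \<Rightarrow> real) \<Rightarrow> nat \<Rightarrow> real" where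
  "bound_term S p0 pis B \<delta> P j =
     (if \<delta> j = 0 then M1 S p0 pis B \<delta> P j
      else min (M1 S p0 pis B \<delta> P j) (M2 S p0 pis B \<delta> P j / (4 * \<delta> j * (1 - \<delta> j))))"

end

theory Submission
  imports Defs
begin

lemma avg:
  fixes h :: "'a \<Rightarrow> real" and q :: "'a \<Rightarrow> 'b"
  assumes fin: "finite S"
  shows "(\<Sum>x\<in>S. h x) = (\<Sum>x\<in>S. (\<Sum>y\<in>{y\<in>S. q y = q x}. h y) / real (card {y\<in>S. q y = q x}))"
proof -
  let ?F = "\<lambda>x. {y\<in>S. q y = q x}"
  have eqF: "?F y = ?F x" if "q y = q x" for x y using that by auto
  have "(\<Sum>x\<in>S. (\<Sum>y\<in>?F x. h y) / real (card (?F x)))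
      = (\<Sum>x\<in>S. \<Sum>y\<in>S. if q y = q x then h y / real (card (?F y)) else 0)"
  proof (rule sum.cong[OF refl])
    fix x assume "x \<in> S"
    have "(\<Sum>y\<in>?F x. h y) / real (card (?F x)) = (\<Sum>y\<in>?F x. h y / real (card (?F x)))"
      by (simp add: sum_divide_distrib)
    also have "\<dots> = (\<Sum>y\<in>S. if q y = q x then h y / real (card (?F x)) else 0)"
      using fin by (simp add: sum.inter_filter)
    also have "\<dots> = (\<Sum>y\<in>S. if q y = q x then h y / real (card (?F y)) else 0)"
      by (rule sum.cong[OF refl]) (metis eqF)
    finally show "(\<Sum>y\<in>?F x. h y) / real (card (?F x)) = (\<Sum>y\<in>S. if q y = q x then h y / real (card (?F y)) else 0)" .
  qed
  also have "\<dots> = (\<Sum>y\<in>S. \<Sum>x\<in>S. if q y = q x then h y / real (card (?F y)) else 0)"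
    by (rule sum.swap)
  also have "\<dots> = (\<Sum>y\<in>S. h y)"
  proof (rule sum.cong[OF refl])
    fix y assume y: "y \<in> S"
    have "(\<Sum>x\<in>S. if q y = q x then h y / real (card (?F y)) else 0)
        = (\<Sum>x\<in>?F y. h y / real (card (?F y)))"
    proof -
      have e: "{x\<in>S. q y = q x} = ?F y" by auto
      show ?thesis using fin by (simp add: sum.inter_filter[symmetric] e)
    qed
    also have "\<dots> = h y"
    proof -
      have "card (?F y) > 0" using fin y by (auto simp: card_gt_0_iff)
      then show ?thesis by simp
    qed
    finally show "(\<Sum>x\<in>S. if q y = q x then h y / real (card (?F y)) else 0) = h y" .
  qed
  finally show ?thesis by simp
qed

locale thm_setup =
  fixes S :: "'a set" and p0 :: "'a \<Rightarrow> 'b" and pis :: "nat \<Rightarrow> 'a \<Rightarrow> 'b"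
    and P :: "'a \<Rightarrow> real" and J :: nat and B :: "nat \<Rightarrow> 'a set" and \<delta> :: "nat \<Rightarrow> real"
  assumes finS: "finite S"
    and P_nonneg: "\<forall>x\<in>S. 0 \<le> P x"
    and P_meas: "\<forall>x\<in>S. \<forall>x'\<in>S. p0 x = p0 x' \<longrightarrow> P x = P x'"
    and inv_sys: "\<forall>j\<in>{1..J}. \<forall>x\<in>S. \<forall>x'\<in>S.
                    pimap p0 pis j x = pimap p0 pis j x' \<longrightarrow> pimap p0 pis (j - 1) x = pimap p0 pis (j - 1) x'"
    and B_sub: "\<forall>j\<in>{1..J}. B j \<subseteq> S"
    and B_meas: "\<forall>j\<in>{1..J}. \<forall>x\<in>B j. \<forall>x'\<in>S. pis j x' = pis j x \<longrightarrow> x' \<in> B j"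
    and \<delta>_range: "\<forall>j\<in>{1..J}. 0 \<le> \<delta> j \<and> \<delta> j \<le> 1/2"
begin

abbreviation "F k x \<equiv> fibre S p0 pis k x"
abbreviation "al j x \<equiv> alpha S p0 pis B j x"
abbreviation "fa j x \<equiv> factor S p0 pis B \<delta> j x"
abbreviation "PP k x \<equiv> Pj S p0 pis B \<delta> P k x"

definition g :: "nat \<Rightarrow> real \<Rightarrow> real" where
  "g j a = (if a < \<delta> j then 0 else if a = 0 then 0 else (a - \<delta> j) / (1 - \<delta> j))"

lemma F_eq: "pimap p0 pis k y = pimap p0 pis k x \<Longrightarrow> F k y = F k x"
  unfolding fibre_def by auto

lemma al_eq: "pimap p0 pis (j - 1) y = pimap p0 pis (j - 1) x \<Longrightarrow> al j y = al j x"
  unfolding alpha_def using F_eq by metis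

lemma x_in_F: "x \<in> S \<Longrightarrow> x \<in> F k x"
  unfolding fibre_def by auto

lemma F_fin: "finite (F k x)"
  unfolding fibre_def using finS by auto

lemma F_card: "x \<in> S \<Longrightarrow> card (F k x) > 0"
  using x_in_F[of x k] F_fin[of k x] by (auto simp: card_gt_0_iff)

lemma al_range: "x \<in> S \<Longrightarrow> 0 \<le> al j x \<and> al j x \<le> 1"
proof -
  assume x: "x \<in> S"
  have "card (F (j-1) x \<inter> B j) \<le> card (F (j-1) x)" using F_fin by (intro card_mono) auto
  then show ?thesis using F_card[OF x, of "j-1"] unfolding alpha_def by (simp add: divide_le_eq_1)
qed

lemma refine:
  "k \<le> J \<Longrightarrow> j \<le> k \<Longrightarrow> x \<in> S \<Longrightarrow> y \<in> S \<Longrightarrow> pimap p0 pis k x = pimap p0 pis k y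
   \<Longrightarrow> pimap p0 pis j x = pimap p0 pis j y"
proof (induction k)
  case 0
  then show ?case by simp
next
  case (Suc k)
  show ?case
  proof (cases "j = Suc k")
    case True
    then show ?thesis using Suc by simp
  next
    case False
    have "pimap p0 pis k x = pimap p0 pis k y"
      using inv_sys Suc.prems by (metis atLeastAtMost_iff diff_Suc_1 le_add1 plus_1_eq_Suc)
    then show ?thesis using Suc False by simp
  qed
qed

lemma B_iff:
  assumes j: "j \<in> {1..J}" and x: "x \<in> S" and y: "y \<in> S" and e: "pimap p0 pis j x = pimap p0 pis j y"
  shows "x \<in> B j \<longleftrightarrow> y \<in> B j"
proof -
  have "pis j x = pis j y" using e j by (simp add: pimap_def)
  then show ?thesis using B_meas j x y by metis
qed

lemma fa_eq:
  assumes j: "Suc k \<in> {1..J}" and x: "x \<in> S" and y: "y \<in> S" and e: "pimap p0 pis (Suc k) x = pimap p0 pis (Suc k) y"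
  shows "fa (Suc k) x = fa (Suc k) y"
proof -
  have "pimap p0 pis k x = pimap p0 pis k y" using bspec[OF bspec[OF bspec[OF inv_sys j] x] y] e by simp
  then have "al (Suc k) x = al (Suc k) y" using al_eq[of "Suc k" x y] by simp
  moreover have "x \<in> B (Suc k) \<longleftrightarrow> y \<in> B (Suc k)" using B_iff[OF j x y e] .
  ultimately show ?thesis unfolding factor_def Let_def by simp
qed

lemma PP_meas: "k \<le> J \<Longrightarrow> x \<in> S \<Longrightarrow> y \<in> S \<Longrightarrow> pimap p0 pis k x = pimap p0 pis k y \<Longrightarrow> PP k x = PP k y"
proof (induction k)
  case 0
  then have "p0 x = p0 y" by (simp add: pimap_def)
  then show ?case using bspec[OF bspec[OF P_meas, of x], of y] 0 by simp
next
  case (Suc k)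
  have j: "Suc k \<in> {1..J}" using Suc by simp
  have "pimap p0 pis k x = pimap p0 pis k y" using bspec[OF bspec[OF bspec[OF inv_sys j], of x], of y] Suc.prems by simp
  then have "PP k x = PP k y" using Suc.IH Suc.prems by simp
  moreover have "fa (Suc k) x = fa (Suc k) y" using fa_eq[OF j] Suc.prems by blast
  ultimately show ?case by simp
qed

lemma fa_nonneg: assumes j: "j \<in> {1..J}" and x: "x \<in> S" shows "0 \<le> fa j x"
proof -
  have d: "0 \<le> \<delta> j" "\<delta> j \<le> 1/2" using bspec[OF \<delta>_range j] by auto
  have a: "0 \<le> al j x" "al j x \<le> 1" using al_range[OF x] by auto
  define a where "a = al j x"
  have a': "0 \<le> a" "a \<le> 1" using a a_def by auto
  show ?thesis unfolding factor_def Let_def a_def[symmetric]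
  proof (cases "a < \<delta> j")
    case True
    then show "0 \<le> (if a < \<delta> j then (if x \<notin> B j then 1 else 0) / (1 - a) else if a = 0 then 1
        else (a - (if x \<in> B j then \<delta> j else 0)) / (a * (1 - \<delta> j)))" using d by simp
  next
    case False
    then have "a \<ge> \<delta> j" by simp
    moreover have "a = 0 \<or> a > 0" using a' by auto
    ultimately show "0 \<le> (if a < \<delta> j then (if x \<notin> B j then 1 else 0) / (1 - a) else if a = 0 then 1
        else (a - (if x \<in> B j then \<delta> j else 0)) / (a * (1 - \<delta> j)))" using d False
      by (auto intro!: divide_nonneg_pos)
  qed
qed

lemma PP_nonneg: "k \<le> J \<Longrightarrow> x \<in> S \<Longrightarrow> 0 \<le> PP k x"
proof (induction k)
  case 0
  then show ?case using P_nonneg by simp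
next
  case (Suc k)
  then show ?case using fa_nonneg[of "Suc k" x] by simp
qed

lemma fibre_sums:
  assumes j: "Suc k \<in> {1..J}" and x: "x \<in> S"
  shows "(\<Sum>y\<in>F k x. fa (Suc k) y) = real (card (F k x))"
    and "(\<Sum>y\<in>F k x \<inter> B (Suc k). fa (Suc k) y) = real (card (F k x)) * g (Suc k) (al (Suc k) x)"
proof -
  define c where "c = real (card (F k x))"
  define a where "a = al (Suc k) x"
  define nB where "nB = real (card (F k x \<inter> B (Suc k)))"
  define d where "d = \<delta> (Suc k)"
  have d: "0 \<le> d" "d \<le> 1/2" using bspec[OF \<delta>_range j] d_def by auto
  have cpos: "c > 0" using F_card[OF x] c_def by simp
  have nB: "nB = a * c" using cpos unfolding a_def c_def nB_def alpha_def by simp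
  have a01: "0 \<le> a" "a \<le> 1" using al_range[OF x] a_def by auto
  have nN: "real (card (F k x - B (Suc k))) = c - nB"
    using card_Int_Diff[OF F_fin, of k x "B (Suc k)"] unfolding c_def nB_def by simp
  define vB where "vB = (if a < d then 0 else if a = 0 then 1 else (a - d) / (a * (1 - d)))"
  define vN where "vN = (if a < d then 1 / (1 - a) else if a = 0 then 1 else a / (a * (1 - d)))"
  have fay: "fa (Suc k) y = (if y \<in> B (Suc k) then vB else vN)" if y: "y \<in> F k x" for y
  proof -
    have "pimap p0 pis k y = pimap p0 pis k x" using y unfolding fibre_def by simp
    then have "al (Suc k) y = a" using al_eq[of "Suc k" y x] a_def by simp
    then show ?thesis unfolding factor_def Let_def vB_def vN_def d_def by simp
  qed
  have sB: "(\<Sum>y\<in>F k x \<inter> B (Suc k). fa (Suc k) y) = nB * vB"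
  proof -
    have "(\<Sum>y\<in>F k x \<inter> B (Suc k). fa (Suc k) y) = (\<Sum>y\<in>F k x \<inter> B (Suc k). vB)"
      by (rule sum.cong[OF refl]) (simp add: fay)
    then show ?thesis unfolding nB_def by simp
  qed
  have sN: "(\<Sum>y\<in>F k x - B (Suc k). fa (Suc k) y) = (c - nB) * vN"
  proof -
    have "(\<Sum>y\<in>F k x - B (Suc k). fa (Suc k) y) = (\<Sum>y\<in>F k x - B (Suc k). vN)"
      by (rule sum.cong[OF refl]) (simp add: fay)
    then show ?thesis using nN by simp
  qed
  have tot: "(\<Sum>y\<in>F k x. fa (Suc k) y) = nB * vB + (c - nB) * vN"
    using sum.Int_Diff[OF F_fin, of "fa (Suc k)" k x "B (Suc k)"] sB sN by simp
  have "nB * vB + (c - nB) * vN = c"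
  proof (cases "a < d")
    case True
    then have "1 - a \<noteq> 0" using d by simp
    then show ?thesis using True unfolding vB_def vN_def nB by (simp add: field_simps)
  next
    case False
    show ?thesis
    proof (cases "a = 0")
      case True
      then show ?thesis using False unfolding vB_def vN_def nB by simp
    next
      case a0: False
      have d1: "1 - d \<noteq> 0" using d by simp
      have v1: "vB = (a - d) / (a * (1 - d))" "vN = 1 / (1 - d)" using False a0 unfolding vB_def vN_def by auto
      have "nB * vB = c * (a - d) / (1 - d)" unfolding v1 nB using a0 d1 by (simp add: field_simps)
      moreover have "(c - nB) * vN = (c - a * c) / (1 - d)" unfolding v1 nB by simp
      ultimately have "nB * vB + (c - nB) * vN = (c * (a - d) + (c - a * c)) / (1 - d)"
        by (simp add: add_divide_distrib)
      also have "\<dots> = c * (1 - d) / (1 - d)" by (simp add: algebra_simps)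
      also have "\<dots> = c" using d1 by simp
      finally show ?thesis .
    qed
  qed
  then show "(\<Sum>y\<in>F k x. fa (Suc k) y) = real (card (F k x))" using tot c_def by simp
  have "nB * vB = c * g (Suc k) a"
  proof (cases "a < d")
    case True
    then show ?thesis unfolding vB_def g_def d_def by simp
  next
    case False
    show ?thesis
    proof (cases "a = 0")
      case True
      then show ?thesis using False unfolding vB_def g_def d_def nB by simp
    next
      case a0: False
      have "1 - d \<noteq> 0" using d by simp
      then show ?thesis using False a0 unfolding vB_def g_def d_def[symmetric] nB by (simp add: field_simps)
    qed
  qed
  then show "(\<Sum>y\<in>F k x \<inter> B (Suc k). fa (Suc k) y) = real (card (F k x)) * g (Suc k) (al (Suc k) x)"
    using sB c_def a_def by simp
qed

lemma mass_pres:
  assumes j: "Suc k \<in> {1..J}"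
    and A: "\<forall>x\<in>S. \<forall>y\<in>S. pimap p0 pis k x = pimap p0 pis k y \<longrightarrow> (x \<in> A \<longleftrightarrow> y \<in> A)"
  shows "(\<Sum>x\<in>S. if x \<in> A then PP (Suc k) x else 0) = (\<Sum>x\<in>S. if x \<in> A then PP k x else 0)"
proof -
  have "(\<Sum>x\<in>S. if x \<in> A then PP (Suc k) x else 0)
     = (\<Sum>x\<in>S. (\<Sum>y\<in>F k x. if y \<in> A then PP (Suc k) y else 0) / real (card (F k x)))"
    using avg[OF finS, of "\<lambda>x. if x \<in> A then PP (Suc k) x else 0" "pimap p0 pis k"]
    by (simp add: fibre_def)
  also have "\<dots> = (\<Sum>x\<in>S. if x \<in> A then PP k x else 0)"
  proof (rule sum.cong[OF refl])
    fix x assume x: "x \<in> S"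
    have kJ: "k \<le> J" using j by simp
    have "(\<Sum>y\<in>F k x. if y \<in> A then PP (Suc k) y else 0)
        = (\<Sum>y\<in>F k x. if x \<in> A then PP k x * fa (Suc k) y else 0)"
    proof (rule sum.cong[OF refl])
      fix y assume y: "y \<in> F k x"
      have yS: "y \<in> S" and e: "pimap p0 pis k y = pimap p0 pis k x" using y unfolding fibre_def by auto
      have "y \<in> A \<longleftrightarrow> x \<in> A" using bspec[OF bspec[OF A yS] x] e by simp
      moreover have "PP k y = PP k x" using PP_meas[OF kJ yS x e] .
      ultimately show "(if y \<in> A then PP (Suc k) y else 0) = (if x \<in> A then PP k x * fa (Suc k) y else 0)"
        by simp
    qed
    also have "\<dots> = (if x \<in> A then PP k x * real (card (F k x)) else 0)"
      using fibre_sums(1)[OF j x] by (simp add: sum_distrib_left[symmetric])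
    finally show "(\<Sum>y\<in>F k x. if y \<in> A then PP (Suc k) y else 0) / real (card (F k x))
        = (if x \<in> A then PP k x else 0)"
      using F_card[OF x, of k] by simp
  qed
  finally show ?thesis .
qed

lemma step_mass:
  assumes j: "Suc k \<in> {1..J}"
  shows "(\<Sum>x\<in>S. if x \<in> B (Suc k) then PP (Suc k) x else 0)
       = (\<Sum>x\<in>S. PP k x * g (Suc k) (al (Suc k) x))"
proof -
  have "(\<Sum>x\<in>S. if x \<in> B (Suc k) then PP (Suc k) x else 0)
     = (\<Sum>x\<in>S. (\<Sum>y\<in>F k x. if y \<in> B (Suc k) then PP (Suc k) y else 0) / real (card (F k x)))"
    using avg[OF finS, of "\<lambda>x. if x \<in> B (Suc k) then PP (Suc k) x else 0" "pimap p0 pis k"]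
    by (simp add: fibre_def)
  also have "\<dots> = (\<Sum>x\<in>S. PP k x * g (Suc k) (al (Suc k) x))"
  proof (rule sum.cong[OF refl])
    fix x assume x: "x \<in> S"
    have kJ: "k \<le> J" using j by simp
    have "(\<Sum>y\<in>F k x. if y \<in> B (Suc k) then PP (Suc k) y else 0)
        = (\<Sum>y\<in>F k x. if y \<in> B (Suc k) then PP k x * fa (Suc k) y else 0)"
    proof (rule sum.cong[OF refl])
      fix y assume y: "y \<in> F k x"
      have yS: "y \<in> S" and e: "pimap p0 pis k y = pimap p0 pis k x" using y unfolding fibre_def by auto
      have "PP k y = PP k x" using PP_meas[OF kJ yS x e] .
      then show "(if y \<in> B (Suc k) then PP (Suc k) y else 0) = (if y \<in> B (Suc k) then PP k x * fa (Suc k) y else 0)"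
        by simp
    qed
    also have "\<dots> = (\<Sum>y\<in>F k x \<inter> B (Suc k). PP k x * fa (Suc k) y)"
      using sum.inter_restrict[OF F_fin, of "\<lambda>y. PP k x * fa (Suc k) y" k x "B (Suc k)"] by simp
    also have "\<dots> = PP k x * (real (card (F k x)) * g (Suc k) (al (Suc k) x))"
      using fibre_sums(2)[OF j x] by (simp add: sum_distrib_left[symmetric])
    finally show "(\<Sum>y\<in>F k x. if y \<in> B (Suc k) then PP (Suc k) y else 0) / real (card (F k x))
        = PP k x * g (Suc k) (al (Suc k) x)"
      using F_card[OF x, of k] by simp
  qed
  finally show ?thesis .
qed

lemma g_bounds:
  assumes j: "j \<in> {1..J}" and a: "0 \<le> a" "a \<le> 1"
  shows "0 \<le> g j a" "g j a \<le> a" "\<delta> j > 0 \<Longrightarrow> g j a \<le> a^2 / (4 * \<delta> j * (1 - \<delta> j))"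
proof -
  have d: "0 \<le> \<delta> j" "\<delta> j \<le> 1/2" using bspec[OF \<delta>_range j] by auto
  have d1: "1 - \<delta> j > 0" using d by simp
  show "0 \<le> g j a" unfolding g_def using d1 by auto
  show "g j a \<le> a"
  proof (cases "a < \<delta> j \<or> a = 0")
    case True
    then show ?thesis unfolding g_def using a by auto
  next
    case False
    then have ge: "g j a = (a - \<delta> j) / (1 - \<delta> j)" unfolding g_def by auto
    have ad: "a * \<delta> j \<le> \<delta> j" using mult_right_mono[of a 1 "\<delta> j"] a d by simp
    have "(a - \<delta> j) / (1 - \<delta> j) \<le> a" using d1 ad by (simp add: divide_le_eq algebra_simps)
    then show ?thesis using ge by simp
  qed
  assume dp: "\<delta> j > 0"
  show "g j a \<le> a^2 / (4 * \<delta> j * (1 - \<delta> j))"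
  proof (cases "a < \<delta> j \<or> a = 0")
    case True
    then have "g j a = 0" unfolding g_def by auto
    moreover have "0 \<le> a^2 / (4 * \<delta> j * (1 - \<delta> j))" using dp d1 by simp
    ultimately show ?thesis by simp
  next
    case False
    then have "g j a = (a - \<delta> j) / (1 - \<delta> j)" unfolding g_def by auto
    also have "\<dots> = (4 * \<delta> j * (a - \<delta> j)) / (4 * \<delta> j * (1 - \<delta> j))" using dp by simp
    also have "\<dots> \<le> a^2 / (4 * \<delta> j * (1 - \<delta> j))"
    proof (rule divide_right_mono)
      have "0 \<le> (a - 2 * \<delta> j)^2" by simp
      then show "4 * \<delta> j * (a - \<delta> j) \<le> a^2" by (simp add: power2_eq_square algebra_simps)
      show "0 \<le> 4 * \<delta> j * (1 - \<delta> j)" using dp d1 by simp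
    qed
    finally show ?thesis .
  qed
qed

lemma propagate:
  assumes j: "j \<in> {1..J}"
  shows "j \<le> k \<Longrightarrow> k \<le> J \<Longrightarrow> (\<Sum>x\<in>S. if x \<in> B j then PP k x else 0) = (\<Sum>x\<in>S. if x \<in> B j then PP j x else 0)"
proof (induction k)
  case 0
  then show ?case using j by simp
next
  case (Suc k)
  show ?case
  proof (cases "j = Suc k")
    case True
    show ?thesis by (simp only: True)
  next
    case False
    then have jk: "j \<le> k" using Suc by simp
    have A: "\<forall>x\<in>S. \<forall>y\<in>S. pimap p0 pis k x = pimap p0 pis k y \<longrightarrow> (x \<in> B j \<longleftrightarrow> y \<in> B j)"
    proof (intro ballI impI)
      fix x y assume x: "x \<in> S" and y: "y \<in> S" and e: "pimap p0 pis k x = pimap p0 pis k y"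
      have "pimap p0 pis j x = pimap p0 pis j y" using refine[of k j x y] Suc.prems jk x y e by simp
      then show "x \<in> B j \<longleftrightarrow> y \<in> B j" using B_iff[OF j x y] by simp
    qed
    have "(\<Sum>x\<in>S. if x \<in> B j then PP (Suc k) x else 0) = (\<Sum>x\<in>S. if x \<in> B j then PP k x else 0)"
    proof -
      have "Suc k \<in> {1..J}" using Suc.prems by simp
      then show ?thesis using mass_pres[OF _ A] by blast
    qed
    then show ?thesis using Suc.IH jk Suc.prems by simp
  qed
qed

lemma PjB_bound:
  assumes j: "j \<in> {1..J}"
  shows "(\<Sum>x\<in>S. if x \<in> B j then PP j x else 0) \<le> bound_term S p0 pis B \<delta> P j"
proof -
  obtain k where jk: "j = Suc k" using j by (cases j) auto
  have kJ: "k \<le> J" using j jk by simp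
  have eq: "(\<Sum>x\<in>S. if x \<in> B j then PP j x else 0) = (\<Sum>x\<in>S. PP k x * g j (al j x))"
    using step_mass[of k] j unfolding jk by simp
  have m1: "M1 S p0 pis B \<delta> P j = (\<Sum>x\<in>S. al j x * PP k x)"
    unfolding M1_def Ej_def jk by simp
  have m2: "M2 S p0 pis B \<delta> P j = (\<Sum>x\<in>S. (al j x)^2 * PP k x)"
    unfolding M2_def Ej_def jk by simp
  have le1: "(\<Sum>x\<in>S. PP k x * g j (al j x)) \<le> M1 S p0 pis B \<delta> P j"
    unfolding m1
  proof (rule sum_mono)
    fix x assume x: "x \<in> S"
    have "g j (al j x) \<le> al j x" using g_bounds(2)[OF j] al_range[OF x] by auto
    then show "PP k x * g j (al j x) \<le> al j x * PP k x"
      using mult_left_mono[OF _ PP_nonneg[OF kJ x]] by (metis mult.commute)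
  qed
  show ?thesis
  proof (cases "\<delta> j = 0")
    case True
    then show ?thesis unfolding bound_term_def using eq le1 by simp
  next
    case False
    then have dp: "\<delta> j > 0" using bspec[OF \<delta>_range j] by auto
    have d1: "1 - \<delta> j > 0" using bspec[OF \<delta>_range j] by auto
    have le2: "(\<Sum>x\<in>S. PP k x * g j (al j x)) \<le> M2 S p0 pis B \<delta> P j / (4 * \<delta> j * (1 - \<delta> j))"
    proof -
      have "(\<Sum>x\<in>S. PP k x * g j (al j x)) \<le> (\<Sum>x\<in>S. (al j x)^2 * PP k x / (4 * \<delta> j * (1 - \<delta> j)))"
      proof (rule sum_mono)
        fix x assume x: "x \<in> S"
        have "g j (al j x) \<le> (al j x)^2 / (4 * \<delta> j * (1 - \<delta> j))" using g_bounds(3)[OF j _ _ dp] al_range[OF x] by auto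
        then have "PP k x * g j (al j x) \<le> PP k x * ((al j x)^2 / (4 * \<delta> j * (1 - \<delta> j)))"
          using mult_left_mono[OF _ PP_nonneg[OF kJ x]] by (metis mult.commute)
        then show "PP k x * g j (al j x) \<le> (al j x)^2 * PP k x / (4 * \<delta> j * (1 - \<delta> j))"
          by (simp add: mult.commute)
      qed
      also have "\<dots> = M2 S p0 pis B \<delta> P j / (4 * \<delta> j * (1 - \<delta> j))"
        unfolding m2 by (simp add: sum_divide_distrib)
      finally show ?thesis .
    qed
    show ?thesis unfolding bound_term_def using False eq le1 le2 by simp
  qed
qed

end

theorem theorem2p1:
  fixes S :: "'a set" and p0 :: "'a \<Rightarrow> 'b" and pis :: "nat \<Rightarrow> 'a \<Rightarrow> 'b"
    and P :: "'a \<Rightarrow> real" and J :: nat and B :: "nat \<Rightarrow> 'a set" and \<delta> :: "nat \<Rightarrow> real"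
  assumes finS: "finite S"
    and P_nonneg: "\<forall>x\<in>S. 0 \<le> P x"
    and P_sum: "(\<Sum>x\<in>S. P x) = 1"
    and P_meas: "\<forall>x\<in>S. \<forall>x'\<in>S. p0 x = p0 x' \<longrightarrow> P x = P x'"
    and J_pos: "J \<ge> 1"
    and inv_sys: "\<forall>j\<in>{1..J}. \<forall>x\<in>S. \<forall>x'\<in>S.
                    pimap p0 pis j x = pimap p0 pis j x' \<longrightarrow> pimap p0 pis (j - 1) x = pimap p0 pis (j - 1) x'"
    and B_sub: "\<forall>j\<in>{1..J}. B j \<subseteq> S"
    and B_meas: "\<forall>j\<in>{1..J}. \<forall>x\<in>B j. \<forall>x'\<in>S. pis j x' = pis j x \<longrightarrow> x' \<in> B j"
    and \<delta>_range: "\<forall>j\<in>{1..J}. 0 \<le> \<delta> j \<and> \<delta> j \<le> 1/2"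
    and small: "(\<Sum>j=1..J. bound_term S p0 pis B \<delta> P j) < 1"
  shows "(\<Sum>x\<in>S \<inter> (\<Union>j\<in>{1..J}. B j). Pj S p0 pis B \<delta> P J x) < 1"
proof -
  interpret thm_setup S p0 pis P J B \<delta>
    by (rule thm_setup.intro[OF finS P_nonneg P_meas inv_sys B_sub B_meas \<delta>_range])
  let ?U = "\<Union>j\<in>{1..J}. B j"
  have "(\<Sum>x\<in>S \<inter> ?U. PP J x) = (\<Sum>x\<in>S. if x \<in> ?U then PP J x else 0)"
    by (rule sum.inter_restrict[OF finS])
  also have "\<dots> \<le> (\<Sum>x\<in>S. \<Sum>j\<in>{1..J}. if x \<in> B j then PP J x else 0)"
  proof (rule sum_mono)
    fix x assume x: "x \<in> S"
    have nn: "0 \<le> (if x \<in> B j then PP J x else 0)" for j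
      using PP_nonneg[of J x] x by simp
    show "(if x \<in> ?U then PP J x else 0) \<le> (\<Sum>j\<in>{1..J}. if x \<in> B j then PP J x else 0)"
    proof (cases "x \<in> ?U")
      case True
      then obtain j0 where j0: "j0 \<in> {1..J}" "x \<in> B j0" by blast
      have "(if x \<in> B j0 then PP J x else 0) \<le> (\<Sum>j\<in>{1..J}. if x \<in> B j then PP J x else 0)"
        by (rule member_le_sum[OF j0(1)]) (simp_all add: nn)
      then show ?thesis using True j0 by simp
    next
      case False
      have "0 \<le> (\<Sum>j\<in>{1..J}. if x \<in> B j then PP J x else 0)" by (rule sum_nonneg) (rule nn)
      then show ?thesis using False by simp
    qed
  qed
  also have "\<dots> = (\<Sum>j\<in>{1..J}. \<Sum>x\<in>S. if x \<in> B j then PP J x else 0)"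
    by (rule sum.swap)
  also have "\<dots> = (\<Sum>j\<in>{1..J}. \<Sum>x\<in>S. if x \<in> B j then PP j x else 0)"
  proof (rule sum.cong[OF refl])
    fix j assume j: "j \<in> {1..J}"
    show "(\<Sum>x\<in>S. if x \<in> B j then PP J x else 0) = (\<Sum>x\<in>S. if x \<in> B j then PP j x else 0)"
      using propagate[OF j, of J] j by simp
  qed
  also have "\<dots> \<le> (\<Sum>j\<in>{1..J}. bound_term S p0 pis B \<delta> P j)"
    by (rule sum_mono) (rule PjB_bound)
  also have "\<dots> < 1" using small by simp
  finally show ?thesis .
qed

end
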